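(* There is an absolute constant $c>0$ such that the following holds. Let $0<\alpha<1$, $\zeta>0$, and let $p(z)$ be a monic polynomial of degree $n$ with distinct roots $\lambda_1,\dots,\lambda_n$, all of modulus less than $\alpha$, and let $\Gamma=\Gamma(p)$. Then there exist an integer $d$ with $0\le d\le c\left(1+\max\left\{\frac{1}{1-\alpha}\log\frac{\Gamma}{(1-\alpha)\zeta},0\right\}\right)$ and a polynomial $h(z)$ of degree $d$ with leading coefficient $1$ such that for all $z\in\mathbb{C}$ with $|z|=1$, $$\left|\frac{z^{n+d}}{p(z)}-h(z)\right|\le\zeta.$$
   Context: For a polynomial $h$ of degree $n$ with distinct roots $\lambda_1,\dots,\lambda_n$ inside the unit circle, $\Gamma(h)=\sum_{j=1}^n\left|\frac{\lambda_j^n}{\prod_{i\ne j}(\lambda_i-\lambda_j)}\right|$. *)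

theory Defs
  imports "HOL-Analysis.Analysis" "HOL-Computational_Algebra.Polynomial"
begin

definition Gamma :: "complex poly \<Rightarrow> real" where
  "Gamma h = (\<Sum>lj\<in>{z. poly h z = 0}.
      cmod (lj ^ degree h / (\<Prod>li\<in>{z. poly h z = 0} - {lj}. (li - lj))))"

end

theory Submission
  imports Defs
begin

lemma roots_card_le:
  fixes q :: "complex poly"
  assumes "q \<noteq> 0" "\<forall>x\<in>R. poly q x = 0"
  shows "card R \<le> degree q"
proof -
  have "finite {x. poly q x = 0}" using assms(1) poly_roots_finite by blast
  hence "card R \<le> card {x. poly q x = 0}" using assms(2) by (intro card_mono) auto
  also have "\<dots> \<le> degree q" using card_poly_roots_bound[OF assms(1)] .
  finally show ?thesis .
qed

lemma zero_if_roots: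
  fixes q :: "complex poly"
  assumes "finite R" "\<forall>x\<in>R. poly q x = 0" "degree q < card R"
  shows "q = 0"
  using roots_card_le[of q R] assms by force

lemma prod_linear_degree:
  fixes R :: "complex set"
  assumes "finite R"
  shows "degree (\<Prod>i\<in>R. [:-i,1:]) = card R"
proof -
  have "degree (\<Prod>i\<in>R. [:-i,1:]) = (\<Sum>i\<in>R. degree [:-i,1:])"
    by (rule degree_prod_eq_sum_degree) auto
  thus ?thesis by simp
qed

lemma lagrange:
  fixes R :: "complex set" and q :: "complex poly"
  assumes fin: "finite R" and deg: "degree q < card R"
  shows "q = (\<Sum>j\<in>R. smult (poly q j / (\<Prod>i\<in>R-{j}. (j - i))) (\<Prod>i\<in>R-{j}. [:-i,1:]))"
    (is "q = ?L")
proof -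
  have dL: "degree ?L < card R"
  proof -
    have "degree ?L \<le> card R - 1"
    proof (rule degree_sum_le)
      fix j assume j: "j \<in> R"
      have "degree (smult (poly q j / (\<Prod>i\<in>R-{j}. (j - i))) (\<Prod>i\<in>R-{j}. [:-i,1:]))
          \<le> degree (\<Prod>i\<in>R-{j}. [:-i,1:])" by (rule degree_smult_le)
      also have "\<dots> = card (R - {j})" using fin by (intro prod_linear_degree) auto
      also have "\<dots> = card R - 1" using j fin by simp
      finally show "degree (smult (poly q j / (\<Prod>i\<in>R-{j}. (j - i))) (\<Prod>i\<in>R-{j}. [:-i,1:]))
          \<le> card R - 1" .
    qed (use fin in auto)
    moreover have "card R > 0" using deg by auto
    ultimately show ?thesis by linarith
  qed
  have ev: "poly ?L k = poly q k" if k: "k \<in> R" for k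
  proof -
    have "poly ?L k = (\<Sum>j\<in>R. poly q j / (\<Prod>i\<in>R-{j}. (j - i)) * (\<Prod>i\<in>R-{j}. (k - i)))"
      by (simp add: poly_sum poly_prod)
    also have "\<dots> = (\<Sum>j\<in>{k}. poly q j / (\<Prod>i\<in>R-{j}. (j - i)) * (\<Prod>i\<in>R-{j}. (k - i)))"
    proof (rule sum.mono_neutral_right)
      show "\<forall>j\<in>R - {k}. poly q j / (\<Prod>i\<in>R-{j}. (j - i)) * (\<Prod>i\<in>R-{j}. (k - i)) = 0"
      proof
        fix j assume "j \<in> R - {k}"
        hence "(\<Prod>i\<in>R-{j}. (k - i)) = 0" using fin k by (intro prod_zero) auto
        thus "poly q j / (\<Prod>i\<in>R-{j}. (j - i)) * (\<Prod>i\<in>R-{j}. (k - i)) = 0" by simp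
      qed
    qed (use fin k in auto)
    also have "\<dots> = poly q k"
    proof -
      have "(\<Prod>i\<in>R-{k}. (k - i)) \<noteq> 0" using fin by (subst prod_zero_iff) auto
      thus ?thesis by simp
    qed
    finally show ?thesis .
  qed
  have "q - ?L = 0"
    by (rule zero_if_roots[OF fin]) (use ev in simp, use dL deg degree_diff_less in blast)
  thus ?thesis by simp
qed

lemma partial_frac:
  fixes R :: "complex set" and q :: "complex poly"
  assumes fin: "finite R" and deg: "degree q < card R" and z: "z \<notin> R"
  shows "poly q z / (\<Prod>i\<in>R. (z - i)) =
     (\<Sum>j\<in>R. poly q j / ((\<Prod>i\<in>R-{j}. (j - i)) * (z - j)))"
proof -
  have "poly q z = (\<Sum>j\<in>R. poly q j / (\<Prod>i\<in>R-{j}. (j - i)) * (\<Prod>i\<in>R-{j}. (z - i)))"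
    by (subst lagrange[OF fin deg]) (simp add: poly_sum poly_prod)
  hence "poly q z / (\<Prod>i\<in>R. (z - i)) =
      (\<Sum>j\<in>R. poly q j / (\<Prod>i\<in>R-{j}. (j - i)) * (\<Prod>i\<in>R-{j}. (z - i)) / (\<Prod>i\<in>R. (z - i)))"
    by (simp add: sum_divide_distrib)
  also have "\<dots> = (\<Sum>j\<in>R. poly q j / ((\<Prod>i\<in>R-{j}. (j - i)) * (z - j)))"
  proof (rule sum.cong[OF refl])
    fix j assume j: "j \<in> R"
    have P: "(\<Prod>i\<in>R. (z - i)) = (z - j) * (\<Prod>i\<in>R-{j}. (z - i))"
      using fin j by (simp add: prod.remove)
    have nz: "(\<Prod>i\<in>R-{j}. (z - i)) \<noteq> 0" "z - j \<noteq> 0" using fin z j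
      by (auto simp: prod_zero_iff)
    show "poly q j / (\<Prod>i\<in>R-{j}. (j - i)) * (\<Prod>i\<in>R-{j}. (z - i)) / (\<Prod>i\<in>R. (z - i)) =
          poly q j / ((\<Prod>i\<in>R-{j}. (j - i)) * (z - j))"
      unfolding P using nz by (cases "(\<Prod>i\<in>R-{j}. (j - i)) = 0") (simp_all add: field_simps)
  qed
  finally show ?thesis .
qed


lemma arith_part:
  fixes \<alpha> \<zeta> G :: real
  assumes a: "0 < \<alpha>" "\<alpha> < 1" and z: "\<zeta> > 0" and G: "G \<ge> 0"
  defines "M \<equiv> max ((1 / (1 - \<alpha>)) * ln (G / ((1 - \<alpha>) * \<zeta>))) 0"
  defines "d \<equiv> nat \<lceil>M\<rceil>"
  shows "real d \<le> 1 * (1 + M)" "\<alpha> ^ d * G / (1 - \<alpha>) \<le> \<zeta>"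
proof -
  have M0: "M \<ge> 0" unfolding M_def by simp
  have dd: "real d = real_of_int \<lceil>M\<rceil>" unfolding d_def using M0 by simp
  show "real d \<le> 1 * (1 + M)" using dd of_int_ceiling_le_add_one[of M] by (simp add: add.commute)
  show "\<alpha> ^ d * G / (1 - \<alpha>) \<le> \<zeta>"
  proof (cases "G = 0")
    case True thus ?thesis using z by simp
  next
    case False
    hence Gp: "G > 0" using G by simp
    define K where "K = G / ((1 - \<alpha>) * \<zeta>)"
    have Kp: "K > 0" unfolding K_def using Gp a z by simp
    have dM: "real d \<ge> M" using dd le_of_int_ceiling[of M] by linarith
    have "real d \<ge> ln K / (1 - \<alpha>)" using dM unfolding M_def K_def by auto
    hence dk: "real d * (1 - \<alpha>) \<ge> ln K" using a by (simp add: field_simps)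
    have "\<alpha> ^ d = exp (real d * ln \<alpha>)" using a by (simp add: exp_of_nat_mult)
    also have "\<dots> \<le> exp (- (real d * (1 - \<alpha>)))"
      using ln_le_minus_one[OF a(1)] by (subst exp_le_cancel_iff) (metis minus_diff_eq mult_left_mono mult_minus_right of_nat_0_le_iff)
    also have "\<dots> \<le> exp (- ln K)" using dk by simp
    also have "\<dots> = 1 / K" using Kp by (simp add: exp_minus inverse_eq_divide)
    finally have "\<alpha> ^ d \<le> 1 / K" .
    hence "\<alpha> ^ d * G / (1 - \<alpha>) \<le> (1 / K) * G / (1 - \<alpha>)"
      using Gp a by (intro divide_right_mono mult_right_mono) auto
    also have "\<dots> = \<zeta>" unfolding K_def using Gp a z by (simp add: field_simps)
    finally show ?thesis .
  qed
qed


lemma factor_monic: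
  fixes p :: "complex poly"
  assumes lc: "lead_coeff p = 1" and R: "R = {z. poly p z = 0}" and cd: "card R = degree p"
  shows "p = (\<Prod>i\<in>R. [:-i,1:])" "finite R"
proof -
  have p0: "p \<noteq> 0" using lc by auto
  show fin: "finite R" using R poly_roots_finite[OF p0] by simp
  define Q where "Q = (\<Prod>i\<in>R. [:-i,1:])"
  have dQ: "degree Q = degree p" unfolding Q_def using prod_linear_degree[OF fin] cd by simp
  have lQ: "lead_coeff Q = 1" unfolding Q_def by (simp add: lead_coeff_prod)
  have "p - Q = 0"
  proof (rule ccontr)
    assume ne: "p - Q \<noteq> 0"
    have rQ: "poly Q x = 0" if "x \<in> R" for x
      unfolding Q_def poly_prod using fin that by (intro prod_zero) auto
    have "card R \<le> degree (p - Q)"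
      by (rule roots_card_le[OF ne]) (use R rQ in auto)
    moreover have "degree (p - Q) \<le> degree p" using dQ by (intro degree_diff_le) auto
    moreover have "coeff (p - Q) (degree p) = 0" using lc lQ dQ by simp
    ultimately have "degree (p - Q) = degree p" "lead_coeff (p - Q) = 0" using cd by auto
    thus False using ne leading_coeff_0_iff by metis
  qed
  thus "p = (\<Prod>i\<in>R. [:-i,1:])" unfolding Q_def by simp
qed

theorem lemma5p5:
  "\<exists>c::real. c > 0 \<and>
     (\<forall>(\<alpha>::real) (\<zeta>::real) (p::complex poly).
        0 < \<alpha> \<and> \<alpha> < 1 \<and> \<zeta> > 0 \<and> lead_coeff p = 1 \<and>
        card {z. poly p z = 0} = degree p \<and>
        (\<forall>z. poly p z = 0 \<longrightarrow> cmod z < \<alpha>) \<longrightarrow>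
        (\<exists>(d::nat) (h::complex poly).
           real d \<le> c * (1 + max ((1 / (1 - \<alpha>)) * ln (Gamma p / ((1 - \<alpha>) * \<zeta>))) 0) \<and>
           degree h = d \<and> lead_coeff h = 1 \<and>
           (\<forall>z. cmod z = 1 \<longrightarrow>
              cmod (z ^ (degree p + d) / poly p z - poly h z) \<le> \<zeta>)))"
proof (rule exI[of _ "1::real"], intro conjI allI impI)
  show "(0::real) < 1" by simp
  fix \<alpha> \<zeta> :: real and p :: "complex poly"
  assume A: "0 < \<alpha> \<and> \<alpha> < 1 \<and> \<zeta> > 0 \<and> lead_coeff p = 1 \<and>
        card {z. poly p z = 0} = degree p \<and> (\<forall>z. poly p z = 0 \<longrightarrow> cmod z < \<alpha>)"
  hence a: "0 < \<alpha>" "\<alpha> < 1" and ze: "\<zeta> > 0" and lc: "lead_coeff p = 1"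
    and cd: "card {z. poly p z = 0} = degree p" and rt: "\<And>z. poly p z = 0 \<Longrightarrow> cmod z < \<alpha>"
    by auto
  define R where "R = {z. poly p z = 0}"
  define n where "n = degree p"
  have p0: "p \<noteq> 0" using lc by auto
  have pf: "p = (\<Prod>i\<in>R. [:-i,1:])" and fin: "finite R"
    using factor_monic[OF lc R_def] cd R_def by auto
  have cR: "card R = n" using cd R_def n_def by simp
  define G where "G = Gamma p"
  have G_eq: "G = (\<Sum>lj\<in>R. cmod (lj ^ n / (\<Prod>li\<in>R - {lj}. (li - lj))))"
    unfolding G_def Gamma_def R_def n_def ..
  have G0: "G \<ge> 0" unfolding G_eq by (intro sum_nonneg) auto
  define M where "M = max ((1 / (1 - \<alpha>)) * ln (G / ((1 - \<alpha>) * \<zeta>))) 0"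
  define d where "d = nat \<lceil>M\<rceil>"
  note ar = arith_part[OF a ze G0, folded M_def, folded d_def]
  define m where "m = n + d"
  define X :: "complex poly" where "X = monom 1 m"
  define h where "h = X div p"
  define r where "r = X mod p"
  have Xe: "X = h * p + r" unfolding h_def r_def by simp
  have dr: "r = 0 \<or> degree r < n" unfolding r_def n_def using degree_mod_less[OF p0] by auto
  have cr: "coeff r m = 0" using dr unfolding m_def by (auto intro: coeff_eq_0)
  have dr2: "degree r \<le> m" using dr unfolding m_def by auto
  have hp: "h * p = X - r" using Xe by simp
  have cX: "coeff (X - r) m = 1" using cr unfolding X_def by simp
  have dXr: "degree (X - r) = m"
  proof (rule antisym)
    show "degree (X - r) \<le> m" using dr2 unfolding X_def by (intro degree_diff_le) (auto simp: degree_monom_le)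
    show "m \<le> degree (X - r)" using cX by (intro le_degree) simp
  qed
  have h0: "h \<noteq> 0" using hp cX by auto
  have dh: "degree h = d" using degree_mult_eq[OF h0 p0] hp dXr unfolding m_def n_def by simp
  have lh: "lead_coeff h = 1"
    using lead_coeff_mult[of h p] hp dXr cX lc by simp
  show "\<exists>(d::nat) (h::complex poly).
           real d \<le> 1 * (1 + max ((1 / (1 - \<alpha>)) * ln (Gamma p / ((1 - \<alpha>) * \<zeta>))) 0) \<and>
           degree h = d \<and> lead_coeff h = 1 \<and>
           (\<forall>z. cmod z = 1 \<longrightarrow>
              cmod (z ^ (degree p + d) / poly p z - poly h z) \<le> \<zeta>)"
  proof (intro exI[of _ d] exI[of _ h] conjI allI impI)
    show "real d \<le> 1 * (1 + max ((1 / (1 - \<alpha>)) * ln (Gamma p / ((1 - \<alpha>) * \<zeta>))) 0)"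
      using ar(1) unfolding M_def G_def .
    show "degree h = d" by (rule dh)
    show "lead_coeff h = 1" by (rule lh)
    fix z :: complex assume z1: "cmod z = 1"
    have zR: "z \<notin> R" using rt z1 a unfolding R_def by force
    have pz: "poly p z = (\<Prod>i\<in>R. (z - i))" by (subst pf) (simp add: poly_prod)
    have pz0: "poly p z \<noteq> 0" using zR R_def by auto
    have eqz: "z ^ (degree p + d) / poly p z - poly h z = poly r z / poly p z"
    proof -
      have "z ^ (degree p + d) = poly X z" unfolding X_def m_def n_def by (simp add: poly_monom)
      also have "\<dots> = poly h z * poly p z + poly r z" using Xe by simp
      finally show ?thesis using pz0 by (simp add: field_simps)
    qed
    have "cmod (poly r z / poly p z) \<le> \<zeta>"
    proof (cases "r = 0")
      case True thus ?thesis using ze by simp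
    next
      case False
      hence drn: "degree r < card R" using dr cR by auto
      have rj: "poly r j = j ^ m" if "j \<in> R" for j
      proof -
        have "poly X j = poly h j * poly p j + poly r j" using Xe by simp
        thus ?thesis using that R_def unfolding X_def by (simp add: poly_monom)
      qed
      have "poly r z / poly p z = (\<Sum>j\<in>R. j ^ m / ((\<Prod>i\<in>R-{j}. (j - i)) * (z - j)))"
        unfolding pz partial_frac[OF fin drn zR] using rj by simp
      hence "cmod (poly r z / poly p z) \<le> (\<Sum>j\<in>R. cmod (j ^ m / ((\<Prod>i\<in>R-{j}. (j - i)) * (z - j))))"
        by (simp add: norm_sum)
      also have "\<dots> \<le> (\<Sum>j\<in>R. \<alpha> ^ d / (1 - \<alpha>) * cmod (j ^ n / (\<Prod>i\<in>R - {j}. (i - j))))"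
      proof (rule sum_mono)
        fix j assume j: "j \<in> R"
        have jl: "cmod j < \<alpha>" using rt j R_def by auto
        have np: "cmod (\<Prod>i\<in>R-{j}. (j - i)) = cmod (\<Prod>i\<in>R-{j}. (i - j))"
          by (simp add: prod_norm[symmetric] norm_minus_commute)
        have zj: "cmod (z - j) \<ge> 1 - \<alpha>"
          using norm_triangle_ineq2[of z j] z1 jl by linarith
        define D where "D = cmod (\<Prod>i\<in>R-{j}. (i - j))"
        have D0: "D \<ge> 0" unfolding D_def by simp
        have "cmod (j ^ m / ((\<Prod>i\<in>R-{j}. (j - i)) * (z - j))) = cmod j ^ n * cmod j ^ d / (D * cmod (z - j))"
          unfolding m_def D_def by (simp add: norm_divide norm_mult norm_power np power_add)
        also have "\<dots> \<le> cmod j ^ n * \<alpha> ^ d / (D * (1 - \<alpha>))"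
        proof (cases "D = 0")
          case True thus ?thesis by simp
        next
          case False
          hence Dp: "D > 0" using D0 by simp
          show ?thesis
          proof (rule frac_le)
            show "cmod j ^ n * cmod j ^ d \<le> cmod j ^ n * \<alpha> ^ d"
              using jl by (intro mult_left_mono power_mono) auto
            show "0 < D * (1 - \<alpha>)" using Dp a by simp
            show "D * (1 - \<alpha>) \<le> D * cmod (z - j)" using zj D0 by (intro mult_left_mono)
          qed (use a in auto)
        qed
        also have "\<dots> = \<alpha> ^ d / (1 - \<alpha>) * cmod (j ^ n / (\<Prod>i\<in>R - {j}. (i - j)))"
          unfolding D_def by (simp add: norm_divide norm_power mult.commute)
        finally show "cmod (j ^ m / ((\<Prod>i\<in>R-{j}. (j - i)) * (z - j)))
            \<le> \<alpha> ^ d / (1 - \<alpha>) * cmod (j ^ n / (\<Prod>i\<in>R - {j}. (i - j)))" .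
      qed
      also have "\<dots> = \<alpha> ^ d * G / (1 - \<alpha>)" unfolding G_eq by (simp add: sum_distrib_left sum_divide_distrib)
      also have "\<dots> \<le> \<zeta>" using ar(2) .
      finally show ?thesis .
    qed
    thus "cmod (z ^ (degree p + d) / poly p z - poly h z) \<le> \<zeta>" using eqz by simp
  qed
qed

end
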